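(* Let $P$ be a $\mathcal{V}$-poset. If $P$ is not linearly ordered, then neither a greatest element nor a least element of $P$ (if it exists) is basic; if $P$ is a nonempty linearly ordered set, its least element is basic. Moreover, the status of elements does not change under the three operations generating $\mathcal{V}$-posets, except for linearly ordered sets: if $P'$ is obtained as a disjoint union of $\mathcal{V}$-posets, or by adding a new greatest element to a $\mathcal{V}$-poset $P$, or by adding a new least element to a $\mathcal{V}$-poset $P$ that is not linearly ordered, then every element of the original poset(s) that is basic (respectively non-basic, upper, lower) remains basic (respectively non-basic, upper, lower) in $P'$.
   Context: All posets are finite. A $\mathcal{V}$-poset is a poset that can be generated from the empty poset by repeatedly applying the operations: (1) disjoint union of $\mathcal{V}$-posets, (2) adding a new greatest element, (3) adding a new least element. An element $x$ of a $\mathcal{V}$-poset is basic if: (B.1) there are no two incomparable elements $u,v$ with $x>u$ and $x>v$; (B.2) there are no two incomparable elements $u,v$ with $x<u$ and $x<v$; (B.3) there is no element $u$ with $u<x$ such that for all $w\neq u,x$ one has ($u\ge w\iff x\ge w$) and ($u\le w\iff x\le w$). A non-basic element $u$ is an upper element if $u>b$ for some basic element $b$, and a lower element if $u<b$ for some basic element $b$. *)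

theory Defs
  imports Main
begin

(* A finite poset is represented by a carrier set S and its order relation R :: 'a rel,
   where (x, y) \<in> R means x \<le> y.  R \<subseteq> S \<times> S. *)

inductive vposet :: "'a set \<Rightarrow> 'a rel \<Rightarrow> bool" where
  empty: "vposet {} {}"
| union: "vposet A R \<Longrightarrow> vposet B Q \<Longrightarrow> A \<inter> B = {} \<Longrightarrow> vposet (A \<union> B) (R \<union> Q)"
| add_top: "vposet A R \<Longrightarrow> t \<notin> A \<Longrightarrow> vposet (insert t A) (R \<union> (insert t A) \<times> {t})"
| add_bot: "vposet A R \<Longrightarrow> b \<notin> A \<Longrightarrow> vposet (insert b A) (R \<union> {b} \<times> (insert b A))"

definition linear_on :: "'a set \<Rightarrow> 'a rel \<Rightarrow> bool" where
  "linear_on S R \<longleftrightarrow> (\<forall>x\<in>S. \<forall>y\<in>S. (x, y) \<in> R \<or> (y, x) \<in> R)"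

definition basic :: "'a set \<Rightarrow> 'a rel \<Rightarrow> 'a \<Rightarrow> bool" where
  "basic S R x \<longleftrightarrow> x \<in> S
     \<and> \<not> (\<exists>u\<in>S. \<exists>v\<in>S. (u, x) \<in> R \<and> u \<noteq> x \<and> (v, x) \<in> R \<and> v \<noteq> x
                 \<and> (u, v) \<notin> R \<and> (v, u) \<notin> R)
     \<and> \<not> (\<exists>u\<in>S. \<exists>v\<in>S. (x, u) \<in> R \<and> u \<noteq> x \<and> (x, v) \<in> R \<and> v \<noteq> x
                 \<and> (u, v) \<notin> R \<and> (v, u) \<notin> R)
     \<and> \<not> (\<exists>u\<in>S. (u, x) \<in> R \<and> u \<noteq> x \<and>
             (\<forall>w\<in>S. w \<noteq> u \<and> w \<noteq> x \<longrightarrow>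
                ((w, u) \<in> R \<longleftrightarrow> (w, x) \<in> R) \<and> ((u, w) \<in> R \<longleftrightarrow> (x, w) \<in> R)))"

definition upper :: "'a set \<Rightarrow> 'a rel \<Rightarrow> 'a \<Rightarrow> bool" where
  "upper S R x \<longleftrightarrow> x \<in> S \<and> \<not> basic S R x \<and> (\<exists>b\<in>S. basic S R b \<and> (b, x) \<in> R \<and> b \<noteq> x)"

definition lower :: "'a set \<Rightarrow> 'a rel \<Rightarrow> 'a \<Rightarrow> bool" where
  "lower S R x \<longleftrightarrow> x \<in> S \<and> \<not> basic S R x \<and> (\<exists>b\<in>S. basic S R b \<and> (x, b) \<in> R \<and> b \<noteq> x)"

definition status_preserved :: "'a set \<Rightarrow> 'a rel \<Rightarrow> 'a set \<Rightarrow> 'a rel \<Rightarrow> 'a \<Rightarrow> bool" where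
  "status_preserved S R S' R' x \<longleftrightarrow>
     (basic S R x \<longrightarrow> basic S' R' x)
   \<and> (\<not> basic S R x \<longrightarrow> \<not> basic S' R' x)
   \<and> (upper S R x \<longrightarrow> upper S' R' x)
   \<and> (lower S R x \<longrightarrow> lower S' R' x)"

end

theory Submission
  imports Defs
begin


lemma vp_sub: "vposet S R \<Longrightarrow> R \<subseteq> S \<times> S"
  by (induction rule: vposet.induct) auto

definition "c1 S R x \<longleftrightarrow> (\<exists>u\<in>S. \<exists>v\<in>S. (u, x) \<in> R \<and> u \<noteq> x \<and> (v, x) \<in> R \<and> v \<noteq> x
                 \<and> (u, v) \<notin> R \<and> (v, u) \<notin> R)"
definition "c2 S R x \<longleftrightarrow> (\<exists>u\<in>S. \<exists>v\<in>S. (x, u) \<in> R \<and> u \<noteq> x \<and> (x, v) \<in> R \<and> v \<noteq> x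
                 \<and> (u, v) \<notin> R \<and> (v, u) \<notin> R)"
definition "c3 S R x \<longleftrightarrow> (\<exists>u\<in>S. (u, x) \<in> R \<and> u \<noteq> x \<and>
             (\<forall>w\<in>S. w \<noteq> u \<and> w \<noteq> x \<longrightarrow>
                ((w, u) \<in> R \<longleftrightarrow> (w, x) \<in> R) \<and> ((u, w) \<in> R \<longleftrightarrow> (x, w) \<in> R)))"

lemma basic_alt: "basic S R x \<longleftrightarrow> x \<in> S \<and> \<not> c1 S R x \<and> \<not> c2 S R x \<and> \<not> c3 S R x"
  unfolding basic_def c1_def c2_def c3_def by simp

lemma c12_comp:
  assumes sub: "S \<subseteq> S'" and res: "\<And>u v. u \<in> S \<Longrightarrow> v \<in> S \<Longrightarrow> (u,v) \<in> R' \<longleftrightarrow> (u,v) \<in> R"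
    and comp: "\<And>u v. u \<in> S' \<Longrightarrow> u \<notin> S \<Longrightarrow> v \<in> S' \<Longrightarrow> (u,v) \<in> R' \<or> (v,u) \<in> R' \<or> ((u,y) \<notin> R' \<and> (y,u) \<notin> R')"
    and y: "y \<in> S"
  shows "c1 S' R' y \<longleftrightarrow> c1 S R y" "c2 S' R' y \<longleftrightarrow> c2 S R y"
proof -
  show "c1 S' R' y \<longleftrightarrow> c1 S R y"
  proof
    assume "c1 S' R' y"
    then obtain u v where uv: "u \<in> S'" "v \<in> S'" "(u, y) \<in> R'" "u \<noteq> y" "(v, y) \<in> R'" "v \<noteq> y"
                 "(u, v) \<notin> R'" "(v, u) \<notin> R'" unfolding c1_def by blast
    have "u \<in> S" using comp[OF uv(1) _ uv(2)] uv by blast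
    moreover have "v \<in> S" using comp[OF uv(2) _ uv(1)] uv by blast
    ultimately have "(u, y) \<in> R" "(v, y) \<in> R" "(u,v) \<notin> R" "(v,u) \<notin> R"
      using res[of u v] res[of v u] res[of u y] res[of v y] res[of y u] res[of y v] uv y by simp_all
    then show "c1 S R y" unfolding c1_def using uv \<open>u \<in> S\<close> \<open>v \<in> S\<close> by blast
  next
    assume "c1 S R y"
    then obtain u v where uv: "u \<in> S" "v \<in> S" "(u, y) \<in> R" "u \<noteq> y" "(v, y) \<in> R" "v \<noteq> y"
                 "(u, v) \<notin> R" "(v, u) \<notin> R" unfolding c1_def by blast
    have "(u, y) \<in> R'" "(v, y) \<in> R'" "(u,v) \<notin> R'" "(v,u) \<notin> R'"
      using res[of u v] res[of v u] res[of u y] res[of v y] res[of y u] res[of y v] uv y by simp_all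
    then show "c1 S' R' y" unfolding c1_def using uv sub by blast
  qed
  show "c2 S' R' y \<longleftrightarrow> c2 S R y"
  proof
    assume "c2 S' R' y"
    then obtain u v where uv: "u \<in> S'" "v \<in> S'" "(y, u) \<in> R'" "u \<noteq> y" "(y, v) \<in> R'" "v \<noteq> y"
                 "(u, v) \<notin> R'" "(v, u) \<notin> R'" unfolding c2_def by blast
    have "u \<in> S" using comp[OF uv(1) _ uv(2)] uv by blast
    moreover have "v \<in> S" using comp[OF uv(2) _ uv(1)] uv by blast
    ultimately have "(y, u) \<in> R" "(y, v) \<in> R" "(u,v) \<notin> R" "(v,u) \<notin> R"
      using res[of u v] res[of v u] res[of u y] res[of v y] res[of y u] res[of y v] uv y by simp_all
    then show "c2 S R y" unfolding c2_def using uv \<open>u \<in> S\<close> \<open>v \<in> S\<close> by blast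
  next
    assume "c2 S R y"
    then obtain u v where uv: "u \<in> S" "v \<in> S" "(y, u) \<in> R" "u \<noteq> y" "(y, v) \<in> R" "v \<noteq> y"
                 "(u, v) \<notin> R" "(v, u) \<notin> R" unfolding c2_def by blast
    have "(y, u) \<in> R'" "(y, v) \<in> R'" "(u,v) \<notin> R'" "(v,u) \<notin> R'"
      using res[of u v] res[of v u] res[of u y] res[of v y] res[of y u] res[of y v] uv y by simp_all
    then show "c2 S' R' y" unfolding c2_def using uv sub by blast
  qed
qed

lemma c3_down:
  assumes res: "\<And>u v. u \<in> S \<Longrightarrow> v \<in> S \<Longrightarrow> (u,v) \<in> R' \<longleftrightarrow> (u,v) \<in> R"
    and y: "y \<in> S" and sub: "S \<subseteq> S'" and c: "c3 S' R' y"
    and wit: "\<And>u. u \<in> S' \<Longrightarrow> (u,y) \<in> R' \<Longrightarrow> u \<noteq> y \<Longrightarrow> (\<forall>w\<in>S'. w \<noteq> u \<and> w \<noteq> y \<longrightarrow>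
                ((w, u) \<in> R' \<longleftrightarrow> (w, y) \<in> R') \<and> ((u, w) \<in> R' \<longleftrightarrow> (y, w) \<in> R')) \<Longrightarrow> u \<in> S"
  shows "c3 S R y"
proof -
  obtain u where u0: "u \<in> S'" and rest: "(u, y) \<in> R' \<and> u \<noteq> y \<and> (\<forall>w\<in>S'. w \<noteq> u \<and> w \<noteq> y \<longrightarrow>
                ((w, u) \<in> R' \<longleftrightarrow> (w, y) \<in> R') \<and> ((u, w) \<in> R' \<longleftrightarrow> (y, w) \<in> R'))"
    using c unfolding c3_def by (rule bexE)
  have u: "(u, y) \<in> R'" "u \<noteq> y" using rest by simp_all
  have W: "\<forall>w\<in>S'. w \<noteq> u \<and> w \<noteq> y \<longrightarrow>
                ((w, u) \<in> R' \<longleftrightarrow> (w, y) \<in> R') \<and> ((u, w) \<in> R' \<longleftrightarrow> (y, w) \<in> R')" using rest by (elim conjE)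
  have uS: "u \<in> S" using wit[OF u0 u W] .
  have W2: "\<forall>w\<in>S. w \<noteq> u \<and> w \<noteq> y \<longrightarrow>
                ((w, u) \<in> R \<longleftrightarrow> (w, y) \<in> R) \<and> ((u, w) \<in> R \<longleftrightarrow> (y, w) \<in> R)"
  proof (intro ballI impI)
    fix w assume w: "w \<in> S" "w \<noteq> u \<and> w \<noteq> y"
    then have "w \<in> S'" using sub by auto
    have "((w, u) \<in> R' \<longleftrightarrow> (w, y) \<in> R') \<and> ((u, w) \<in> R' \<longleftrightarrow> (y, w) \<in> R')"
      by (rule mp[OF bspec[OF W \<open>w \<in> S'\<close>]]) (rule w(2))
    then show "((w, u) \<in> R \<longleftrightarrow> (w, y) \<in> R) \<and> ((u, w) \<in> R \<longleftrightarrow> (y, w) \<in> R)"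
      using res[OF w(1) uS] res[OF w(1) y] res[OF uS w(1)] res[OF y w(1)] by simp
  qed
  have "(u, y) \<in> R" using res[OF uS y] u by simp
  then show ?thesis unfolding c3_def using W2 uS u(2) by blast
qed

lemma c3_up:
  assumes res: "\<And>u v. u \<in> S \<Longrightarrow> v \<in> S \<Longrightarrow> (u,v) \<in> R' \<longleftrightarrow> (u,v) \<in> R"
    and y: "y \<in> S" and sub: "S \<subseteq> S'" and c: "c3 S R y"
    and ext: "\<And>u w. u \<in> S \<Longrightarrow> (u,y) \<in> R \<Longrightarrow> u \<noteq> y \<Longrightarrow> w \<in> S' \<Longrightarrow> w \<notin> S \<Longrightarrow>
                ((w, u) \<in> R' \<longleftrightarrow> (w, y) \<in> R') \<and> ((u, w) \<in> R' \<longleftrightarrow> (y, w) \<in> R')"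
  shows "c3 S' R' y"
proof -
  obtain u where uS: "u \<in> S" and rest: "(u, y) \<in> R \<and> u \<noteq> y \<and> (\<forall>w\<in>S. w \<noteq> u \<and> w \<noteq> y \<longrightarrow>
                ((w, u) \<in> R \<longleftrightarrow> (w, y) \<in> R) \<and> ((u, w) \<in> R \<longleftrightarrow> (y, w) \<in> R))"
    using c unfolding c3_def by (rule bexE)
  have u: "(u, y) \<in> R" "u \<noteq> y" using rest by simp_all
  have W: "\<forall>w\<in>S. w \<noteq> u \<and> w \<noteq> y \<longrightarrow>
                ((w, u) \<in> R \<longleftrightarrow> (w, y) \<in> R) \<and> ((u, w) \<in> R \<longleftrightarrow> (y, w) \<in> R)" using rest by (elim conjE)
  have W2: "\<forall>w\<in>S'. w \<noteq> u \<and> w \<noteq> y \<longrightarrow>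
                ((w, u) \<in> R' \<longleftrightarrow> (w, y) \<in> R') \<and> ((u, w) \<in> R' \<longleftrightarrow> (y, w) \<in> R')"
  proof (intro ballI impI)
    fix w assume w: "w \<in> S'" "w \<noteq> u \<and> w \<noteq> y"
    show "((w, u) \<in> R' \<longleftrightarrow> (w, y) \<in> R') \<and> ((u, w) \<in> R' \<longleftrightarrow> (y, w) \<in> R')"
    proof (cases "w \<in> S")
      case True
      have "((w, u) \<in> R \<longleftrightarrow> (w, y) \<in> R) \<and> ((u, w) \<in> R \<longleftrightarrow> (y, w) \<in> R)"
        by (rule mp[OF bspec[OF W True]]) (rule w(2))
      then show ?thesis using res[OF True uS] res[OF True y] res[OF uS True] res[OF y True] by simp
    next
      case False then show ?thesis using ext[OF uS u w(1)] by simp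
    qed
  qed
  have "(u, y) \<in> R'" using res[OF uS y] u by simp
  then show ?thesis unfolding c3_def using W2 uS u(2) sub by blast
qed

lemma sp:
  assumes res: "\<And>u v. u \<in> A \<Longrightarrow> v \<in> A \<Longrightarrow> (u,v) \<in> R' \<longleftrightarrow> (u,v) \<in> R"
    and bas: "\<And>y. y \<in> A \<Longrightarrow> basic S' R' y \<longleftrightarrow> basic A R y" and x: "x \<in> A"
    and sub: "A \<subseteq> S'"
  shows "status_preserved A R S' R' x"
proof -
  have U: "upper S' R' x" if "upper A R x"
  proof -
    from that obtain b where b: "b \<in> A" "basic A R b" "(b, x) \<in> R" "b \<noteq> x" unfolding upper_def by blast
    have "basic S' R' b" using bas b by simp
    moreover have "(b,x) \<in> R'" using res[OF b(1) x] b by simp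
    moreover have "b \<in> S'" "x \<in> S'" using b(1) x sub by auto
    ultimately show ?thesis using that bas[OF x] b unfolding upper_def by blast
  qed
  have L: "lower S' R' x" if "lower A R x"
  proof -
    from that obtain b where b: "b \<in> A" "basic A R b" "(x, b) \<in> R" "b \<noteq> x" unfolding lower_def by blast
    have "basic S' R' b" using bas b by simp
    moreover have "(x,b) \<in> R'" using res[OF x b(1)] b by simp
    moreover have "b \<in> S'" "x \<in> S'" using b(1) x sub by auto
    ultimately show ?thesis using that bas[OF x] b unfolding lower_def by blast
  qed
  show ?thesis unfolding status_preserved_def using U L bas[OF x] by blast
qed

lemma bas_eq:
  assumes sub: "S \<subseteq> S'" and res: "\<And>u v. u \<in> S \<Longrightarrow> v \<in> S \<Longrightarrow> (u,v) \<in> R' \<longleftrightarrow> (u,v) \<in> R"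
    and comp: "\<And>u v. u \<in> S' \<Longrightarrow> u \<notin> S \<Longrightarrow> v \<in> S' \<Longrightarrow> (u,v) \<in> R' \<or> (v,u) \<in> R' \<or> ((u,y) \<notin> R' \<and> (y,u) \<notin> R')"
    and y: "y \<in> S"
    and d: "basic S R y \<Longrightarrow> c3 S' R' y \<Longrightarrow> c3 S R y"
    and u: "c3 S R y \<Longrightarrow> c3 S' R' y"
  shows "basic S' R' y \<longleftrightarrow> basic S R y"
  using c12_comp[OF sub res comp y] d u y sub unfolding basic_alt by blast

lemma vp_refl: "vposet S R \<Longrightarrow> x \<in> S \<Longrightarrow> (x,x) \<in> R"
  by (induction arbitrary: x rule: vposet.induct) auto

lemma vp_anti: "vposet S R \<Longrightarrow> (x,y)\<in>R \<Longrightarrow> (y,x)\<in>R \<Longrightarrow> x=y"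
proof (induction arbitrary: x y rule: vposet.induct)
  case (union A R B Q) then show ?case using vp_sub[OF union.hyps(1)] vp_sub[OF union.hyps(2)] by blast
next
  case (add_top A R t) then show ?case using vp_sub[OF add_top.hyps(1)] by blast
next
  case (add_bot A R b) then show ?case using vp_sub[OF add_bot.hyps(1)] by blast
qed auto

lemma p1: "vposet S R \<Longrightarrow> \<not> linear_on S R \<Longrightarrow> g \<in> S \<Longrightarrow> (\<forall>x\<in>S. (x, g) \<in> R) \<Longrightarrow> \<not> basic S R g"
  unfolding linear_on_def basic_def by blast

lemma p2: "vposet S R \<Longrightarrow> \<not> linear_on S R \<Longrightarrow> g \<in> S \<Longrightarrow> (\<forall>x\<in>S. (g, x) \<in> R) \<Longrightarrow> \<not> basic S R g"
  unfolding linear_on_def basic_def by blast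

lemma p3: "vposet S R \<Longrightarrow> linear_on S R \<Longrightarrow> l \<in> S \<Longrightarrow> (\<forall>x\<in>S. (l, x) \<in> R) \<Longrightarrow> basic S R l"
  using vp_anti[of S R] unfolding linear_on_def basic_def by blast

lemma p4a: assumes "vposet A R" "vposet B Q" "A \<inter> B = {}" "x \<in> A"
  shows "status_preserved A R (A \<union> B) (R \<union> Q) x"
proof -
  have sR: "R \<subseteq> A \<times> A" and sQ: "Q \<subseteq> B \<times> B" using vp_sub assms by auto
  have res: "\<And>u v. u \<in> A \<Longrightarrow> v \<in> A \<Longrightarrow> (u,v) \<in> R \<union> Q \<longleftrightarrow> (u,v) \<in> R"
    using sQ assms(3) by blast
  have bas: "basic (A \<union> B) (R \<union> Q) y \<longleftrightarrow> basic A R y" if y: "y \<in> A" for y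
  proof (rule bas_eq[OF _ res _ y])
    show "A \<subseteq> A \<union> B" by blast
    show "(u,v) \<in> R \<union> Q \<or> (v,u) \<in> R \<union> Q \<or> ((u,y) \<notin> R \<union> Q \<and> (y,u) \<notin> R \<union> Q)"
      if "u \<in> A \<union> B" "u \<notin> A" for u v using that y sR sQ assms(3) by blast
    show "c3 A R y" if "c3 (A \<union> B) (R \<union> Q) y"
      by (rule c3_down[OF res y _ that]) (use y sR sQ assms(3) in blast)+
    show "c3 (A \<union> B) (R \<union> Q) y" if "c3 A R y"
      by (rule c3_up[OF res y _ that]) (use y sR sQ assms(3) in blast)+
  qed
  show ?thesis by (rule sp[OF res bas assms(4)]) auto
qed

lemma p4: assumes "vposet A R" "vposet B Q" "A \<inter> B = {}"
  shows "(\<forall>x\<in>A. status_preserved A R (A \<union> B) (R \<union> Q) x)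
          \<and> (\<forall>x\<in>B. status_preserved B Q (A \<union> B) (R \<union> Q) x)"
proof -
  have "B \<inter> A = {}" using assms(3) by blast
  then show ?thesis using p4a[OF assms] p4a[OF assms(2,1)] by (simp add: Un_commute)
qed

lemma p5: assumes "vposet A R" "t \<notin> A" "x \<in> A"
  shows "status_preserved A R (insert t A) (R \<union> (insert t A) \<times> {t}) x"
proof -
  have sR: "R \<subseteq> A \<times> A" using vp_sub assms by auto
  have res: "\<And>u v. u \<in> A \<Longrightarrow> v \<in> A \<Longrightarrow> (u,v) \<in> R \<union> (insert t A) \<times> {t} \<longleftrightarrow> (u,v) \<in> R"
    using assms(2) by blast
  have bas: "basic (insert t A) (R \<union> (insert t A) \<times> {t}) y \<longleftrightarrow> basic A R y" if y: "y \<in> A" for y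
  proof (rule bas_eq[OF _ res _ y])
    show "A \<subseteq> insert t A" by blast
    show "(u,v) \<in> R \<union> (insert t A) \<times> {t} \<or> (v,u) \<in> R \<union> (insert t A) \<times> {t} \<or> ((u,y) \<notin> R \<union> (insert t A) \<times> {t} \<and> (y,u) \<notin> R \<union> (insert t A) \<times> {t})"
      if "u \<in> insert t A" "v \<in> insert t A" "u \<notin> A" for u v using that by blast
    show "c3 A R y" if "c3 (insert t A) (R \<union> (insert t A) \<times> {t}) y"
      by (rule c3_down[OF res y _ that]) (use y sR assms(2) in blast)+
    show "c3 (insert t A) (R \<union> (insert t A) \<times> {t}) y" if "c3 A R y"
      by (rule c3_up[OF res y _ that]) (use y sR assms(2) in blast)+
  qed
  show ?thesis by (rule sp[OF res bas assms(3)]) auto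
qed

lemma p6: assumes "vposet A R" "b \<notin> A" "\<not> linear_on A R" "x \<in> A"
  shows "status_preserved A R (insert b A) (R \<union> {b} \<times> (insert b A)) x"
proof -
  have sR: "R \<subseteq> A \<times> A" using vp_sub assms by auto
  have res: "\<And>u v. u \<in> A \<Longrightarrow> v \<in> A \<Longrightarrow> (u,v) \<in> R \<union> {b} \<times> (insert b A) \<longleftrightarrow> (u,v) \<in> R"
    using assms(2) by blast
  have bas: "basic (insert b A) (R \<union> {b} \<times> (insert b A)) y \<longleftrightarrow> basic A R y" if y: "y \<in> A" for y
  proof (rule bas_eq[OF _ res _ y])
    show "A \<subseteq> insert b A" by blast
    show "(u,v) \<in> R \<union> {b} \<times> (insert b A) \<or> (v,u) \<in> R \<union> {b} \<times> (insert b A) \<or> ((u,y) \<notin> R \<union> {b} \<times> (insert b A) \<and> (y,u) \<notin> R \<union> {b} \<times> (insert b A))"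
      if "u \<in> insert b A" "v \<in> insert b A" "u \<notin> A" for u v using that by blast
    show "c3 A R y" if B: "basic A R y" and C: "c3 (insert b A) (R \<union> {b} \<times> (insert b A)) y"
    proof (rule c3_down[OF res y _ C])
      show "A \<subseteq> insert b A" by blast
      fix u assume u: "u \<in> insert b A" "(u, y) \<in> R \<union> {b} \<times> insert b A" "u \<noteq> y"
        and W: "\<forall>w\<in>insert b A. w \<noteq> u \<and> w \<noteq> y \<longrightarrow>
                ((w, u) \<in> R \<union> {b} \<times> insert b A \<longleftrightarrow> (w, y) \<in> R \<union> {b} \<times> insert b A) \<and>
                ((u, w) \<in> R \<union> {b} \<times> insert b A \<longleftrightarrow> (y, w) \<in> R \<union> {b} \<times> insert b A)"
      show "u \<in> A"
      proof (rule ccontr)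
        assume "u \<notin> A"
        then have ub: "u = b" using u(1) by blast
        have "\<forall>w\<in>A. (y, w) \<in> R"
        proof
          fix w assume w: "w \<in> A"
          show "(y, w) \<in> R"
          proof (cases "w = y")
            case True then show ?thesis using vp_refl[OF assms(1) y] by simp
          next
            case False
            have "w \<noteq> u" using ub w assms(2) by blast
            then have "(u, w) \<in> R \<union> {b} \<times> insert b A \<longleftrightarrow> (y, w) \<in> R \<union> {b} \<times> insert b A"
              using W w False by blast
            then show ?thesis using ub w y res[OF y w] by blast
          qed
        qed
        then show False using p2[OF assms(1,3) y] B by blast
      qed
    qed
    show "c3 (insert b A) (R \<union> {b} \<times> (insert b A)) y" if "c3 A R y"
      by (rule c3_up[OF res y _ that]) (use y sR assms(2) in blast)+
  qed
  show ?thesis by (rule sp[OF res bas assms(4)]) auto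
qed


theorem lemma3p6:
  shows
  "(\<forall>(S::'a set) R g. vposet S R \<and> \<not> linear_on S R \<and> g \<in> S \<and> (\<forall>x\<in>S. (x, g) \<in> R)
        \<longrightarrow> \<not> basic S R g)
   \<and> (\<forall>(S::'a set) R l. vposet S R \<and> \<not> linear_on S R \<and> l \<in> S \<and> (\<forall>x\<in>S. (l, x) \<in> R)
        \<longrightarrow> \<not> basic S R l)
   \<and> (\<forall>(S::'a set) R l. vposet S R \<and> linear_on S R \<and> S \<noteq> {} \<and> l \<in> S \<and> (\<forall>x\<in>S. (l, x) \<in> R)
        \<longrightarrow> basic S R l)
   \<and> (\<forall>(A::'a set) R B Q. vposet A R \<and> vposet B Q \<and> A \<inter> B = {}
        \<longrightarrow> (\<forall>x\<in>A. status_preserved A R (A \<union> B) (R \<union> Q) x)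
          \<and> (\<forall>x\<in>B. status_preserved B Q (A \<union> B) (R \<union> Q) x))
   \<and> (\<forall>(A::'a set) R t. vposet A R \<and> t \<notin> A
        \<longrightarrow> (\<forall>x\<in>A. status_preserved A R (insert t A) (R \<union> (insert t A) \<times> {t}) x))
   \<and> (\<forall>(A::'a set) R b. vposet A R \<and> b \<notin> A \<and> \<not> linear_on A R
        \<longrightarrow> (\<forall>x\<in>A. status_preserved A R (insert b A) (R \<union> {b} \<times> (insert b A)) x))"
  apply (intro conjI allI impI ballI)
       apply (metis p1)
      apply (metis p2)
     apply (metis p3)
    apply (simp add: p4)
   apply (simp add: p4)
  apply (elim conjE, rule p5; assumption)
  apply (elim conjE, rule p6; assumption)
  done

end
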